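(* Let $k$ be a real division algebra and $a_1,\dots,a_n\in k$. Define recursively, for strings of digits (with $\wedge$ the empty string): $P[\wedge]=0$, $Q[\wedge]=1$, $P[a_n]=1$, $Q[a_n]=a_n$, and for $i<n$, $P[a_i,\dots,a_n]=Q[a_{i+1},\dots,a_n]$, $Q[a_i,\dots,a_n]=a_iQ[a_{i+1},\dots,a_n]+P[a_{i+1},\dots,a_n]$. Let $Q_n=Q[a_1,\dots,a_n]$. If $Q[a_i,\dots,a_n]\neq0$ for all $1\le i\le n$, then \[\prod_{i=0}^{n-1}\left\|T^{-1}_{a_{i+1}}\cdots T^{-1}_{a_n}0\right\|=\frac{1}{\|Q_n\|}.\]
   Context: $k\in\{\mathbb{R},\mathbb{C},\mathbb{H},\mathbb{O}\}$ with Euclidean norm $\|x\|^2=x\overline x$; $T_a^{-1}x=(x+a)^{-1}$. *)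

theory Defs
  imports "HOL-Analysis.Analysis"
begin

text \<open>A real normed division algebra (the four algebras R, C, H, O with the Euclidean
norm), presented as a finite-dimensional Euclidean space carrying a bilinear
multiplication with unit e whose norm is multiplicative.  Multiplication need not be
associative (octonions), so it is an explicit parameter.\<close>
definition normed_div_alg :: "('a::euclidean_space \<Rightarrow> 'a \<Rightarrow> 'a) \<Rightarrow> 'a \<Rightarrow> bool" where
  "normed_div_alg mul e \<longleftrightarrow> bilinear mul \<and> (\<forall>x. mul e x = x \<and> mul x e = x)
     \<and> (\<forall>x y. norm (mul x y) = norm x * norm y)"

definition dinv :: "('a \<Rightarrow> 'a \<Rightarrow> 'a) \<Rightarrow> 'a \<Rightarrow> 'a \<Rightarrow> 'a" where
  "dinv mul e x = (THE y. mul x y = e \<and> mul y x = e)"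

definition Tinv :: "('a::real_vector \<Rightarrow> 'a \<Rightarrow> 'a) \<Rightarrow> 'a \<Rightarrow> 'a \<Rightarrow> 'a \<Rightarrow> 'a" where
  "Tinv mul e a x = dinv mul e (x + a)"

text \<open>T^{-1}_{b_1} ... T^{-1}_{b_m} 0 for the string [b_1,...,b_m].\<close>
definition Tchain :: "('a::real_vector \<Rightarrow> 'a \<Rightarrow> 'a) \<Rightarrow> 'a \<Rightarrow> 'a list \<Rightarrow> 'a" where
  "Tchain mul e bs = foldr (Tinv mul e) bs 0"

text \<open>(P[s], Q[s]) for a string s: P[empty]=0, Q[empty]=1,
  P[a#s] = Q[s], Q[a#s] = a Q[s] + P[s]  (this gives P[a]=1, Q[a]=a).\<close>
fun PQ :: "('a::real_vector \<Rightarrow> 'a \<Rightarrow> 'a) \<Rightarrow> 'a \<Rightarrow> 'a list \<Rightarrow> 'a \<times> 'a" where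
  "PQ mul e [] = (0, e)"
| "PQ mul e (b # bs) = (snd (PQ mul e bs), mul b (snd (PQ mul e bs)) + fst (PQ mul e bs))"

definition Pc :: "('a::real_vector \<Rightarrow> 'a \<Rightarrow> 'a) \<Rightarrow> 'a \<Rightarrow> 'a list \<Rightarrow> 'a" where
  "Pc mul e bs = fst (PQ mul e bs)"

definition Qc :: "('a::real_vector \<Rightarrow> 'a \<Rightarrow> 'a) \<Rightarrow> 'a \<Rightarrow> 'a list \<Rightarrow> 'a" where
  "Qc mul e bs = snd (PQ mul e bs)"

end

theory Submission
  imports Defs
begin

lemma nda_parts:
  assumes "normed_div_alg mul e"
  shows "bilinear mul" "\<And>x. mul e x = x" "\<And>x. mul x e = x"
    "\<And>x y. norm (mul x y) = norm x * norm y"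
  using assms unfolding normed_div_alg_def by auto

lemma nda_inner1:
  assumes "normed_div_alg mul e"
  shows "inner (mul y x) (mul y z) = (norm y)^2 * inner x z"
proof -
  note P = nda_parts[OF assms]
  have "(norm (mul y (x+z)))^2 = (norm y)^2 * (norm (x+z))^2"
    using P(4) by (simp add: power_mult_distrib)
  hence "inner (mul y x + mul y z) (mul y x + mul y z) = (norm y)^2 * inner (x+z) (x+z)"
    by (simp add: power2_norm_eq_inner bilinear_radd[OF P(1)])
  moreover have "inner (mul y x) (mul y x) = (norm y)^2 * inner x x"
    using P(4)[of y x] by (simp add: power2_norm_eq_inner[symmetric] power_mult_distrib)
  moreover have "inner (mul y z) (mul y z) = (norm y)^2 * inner z z"
    using P(4)[of y z] by (simp add: power2_norm_eq_inner[symmetric] power_mult_distrib)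
  ultimately show ?thesis
    by (simp add: inner_add_left inner_add_right inner_commute algebra_simps)
qed

lemma nda_inner2:
  assumes "normed_div_alg mul e"
  shows "inner (mul y x) (mul w z) + inner (mul w x) (mul y z) = 2 * inner y w * inner x z"
proof -
  note P = nda_parts[OF assms]
  have "inner (mul (y+w) x) (mul (y+w) z) = (norm (y+w))^2 * inner x z"
    by (rule nda_inner1[OF assms])
  hence "inner (mul y x + mul w x) (mul y z + mul w z) = inner (y+w) (y+w) * inner x z"
    by (simp add: power2_norm_eq_inner bilinear_ladd[OF P(1)])
  thus ?thesis
    using nda_inner1[OF assms, of y x z] nda_inner1[OF assms, of w x z]
    by (simp add: inner_add_left inner_add_right inner_commute power2_norm_eq_inner algebra_simps)
qed

definition cj :: "('a::euclidean_space \<Rightarrow> 'a \<Rightarrow> 'a) \<Rightarrow> 'a \<Rightarrow> 'a \<Rightarrow> 'a" where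
  "cj mul e y = (2 * inner y e) *\<^sub>R e - y"

lemma nda_cj_adj:
  assumes "normed_div_alg mul e"
  shows "inner (mul (cj mul e y) x) z = inner x (mul y z)"
proof -
  note P = nda_parts[OF assms]
  have "inner (mul y x) z + inner x (mul y z) = 2 * inner y e * inner x z"
    using nda_inner2[OF assms, of y x e z] P(2) by simp
  moreover have "mul (cj mul e y) x = (2 * inner y e) *\<^sub>R x - mul y x"
    unfolding cj_def by (simp add: bilinear_lsub[OF P(1)] bilinear_lmul[OF P(1)] P(2))
  ultimately show ?thesis
  proof -
    assume h1: "inner (mul y x) z + inner x (mul y z) = 2 * inner y e * inner x z"
      and h2: "mul (cj mul e y) x = (2 * inner y e) *\<^sub>R x - mul y x"
    have "inner (mul (cj mul e y) x) z = 2 * inner y e * inner x z - inner (mul y x) z"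
      unfolding h2 by (simp add: inner_diff_left)
    thus ?thesis using h1 by linarith
  qed
qed

lemma nda_cj_left:
  assumes "normed_div_alg mul e"
  shows "mul (cj mul e y) (mul y x) = (norm y)^2 *\<^sub>R x"
proof -
  let ?u = "mul (cj mul e y) (mul y x) - (norm y)^2 *\<^sub>R x"
  have "inner ?u z = 0" for z
    using nda_cj_adj[OF assms, of y "mul y x" z] nda_inner1[OF assms, of y x z]
    by (simp add: inner_diff_left)
  from this[of ?u] show ?thesis by simp
qed

lemma nda_cj_right:
  assumes "normed_div_alg mul e"
  shows "mul y (cj mul e y) = (norm y)^2 *\<^sub>R e"
proof -
  note P = nda_parts[OF assms]
  have "mul (cj mul e y) y = (norm y)^2 *\<^sub>R e"
    using nda_cj_left[OF assms, of y e] P(3) by simp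
  moreover have "mul (cj mul e y) y = mul y (cj mul e y)"
    unfolding cj_def
    by (simp add: bilinear_lsub[OF P(1)] bilinear_lmul[OF P(1)] bilinear_rsub[OF P(1)]
        bilinear_rmul[OF P(1)] P(2) P(3))
  ultimately show ?thesis by simp
qed

lemma nda_dinv:
  assumes "normed_div_alg mul e" "y \<noteq> 0"
  shows "dinv mul e y = (1 / (norm y)^2) *\<^sub>R cj mul e y"
  unfolding dinv_def
proof (rule the_equality)
  note P = nda_parts[OF assms(1)]
  show "mul y ((1 / (norm y)^2) *\<^sub>R cj mul e y) = e \<and> mul ((1 / (norm y)^2) *\<^sub>R cj mul e y) y = e"
    using nda_cj_right[OF assms(1), of y] nda_cj_left[OF assms(1), of y e] P(3) assms(2)
    by (simp add: bilinear_rmul[OF P(1)] bilinear_lmul[OF P(1)])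
  fix z assume "mul y z = e \<and> mul z y = e"
  hence "mul (cj mul e y) (mul y z) = cj mul e y" using P(3) by simp
  hence "(norm y)^2 *\<^sub>R z = cj mul e y" using nda_cj_left[OF assms(1)] by simp
  moreover have "(1 / (norm y)^2) *\<^sub>R ((norm y)^2 *\<^sub>R z) = z" using assms(2) by simp
  ultimately show "z = (1 / (norm y)^2) *\<^sub>R cj mul e y" by metis
qed

lemma nda_dinv_left:
  assumes "normed_div_alg mul e" "y \<noteq> 0"
  shows "mul (dinv mul e y) (mul y x) = x"
  using nda_dinv[OF assms] nda_cj_left[OF assms(1)] assms(2)
    bilinear_lmul[OF nda_parts(1)[OF assms(1)]] by simp

lemma nda_e:
  assumes "normed_div_alg mul (e::'a::euclidean_space)"
  shows "norm e = 1"
proof -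
  note P = nda_parts[OF assms]
  obtain b :: 'a where b: "b \<in> Basis" using nonempty_Basis by blast
  hence "b \<noteq> 0" by auto
  have "e \<noteq> 0"
  proof
    assume "e = 0"
    hence "mul e b = 0" using bilinear_lzero[OF P(1)] by simp
    thus False using P(2)[of b] \<open>b \<noteq> 0\<close> by simp
  qed
  have "norm e = norm e * norm e" using P(4)[of e e] P(2)[of e] by simp
  thus ?thesis using \<open>e \<noteq> 0\<close> by simp
qed

lemma key:
  assumes "normed_div_alg mul e"
  shows "(\<forall>k<length s. Qc mul e (drop k s) \<noteq> 0) \<Longrightarrow> mul (Tchain mul e s) (Qc mul e s) = Pc mul e s"
proof (induction s)
  case Nil
  note P = nda_parts[OF assms]
  show ?case unfolding Tchain_def Qc_def Pc_def using bilinear_lzero[OF P(1)] by simp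
next
  case (Cons b bs)
  note P = nda_parts[OF assms]
  have h: "\<forall>k<length bs. Qc mul e (drop k bs) \<noteq> 0"
  proof (intro allI impI)
    fix k assume "k < length bs"
    thus "Qc mul e (drop k bs) \<noteq> 0" using Cons.prems[rule_format, of "Suc k"] by simp
  qed
  have q: "Qc mul e (b # bs) \<noteq> 0" using Cons.prems[rule_format, of 0] by simp
  define t where "t = Tchain mul e bs"
  have ih: "mul t (Qc mul e bs) = Pc mul e bs" using Cons.IH[OF h] t_def by simp
  have qeq: "Qc mul e (b # bs) = mul (t + b) (Qc mul e bs)"
    using ih by (simp add: Qc_def Pc_def bilinear_ladd[OF P(1)])
  have "t + b \<noteq> 0"
  proof
    assume "t + b = 0"
    thus False using q qeq bilinear_lzero[OF P(1)] by simp
  qed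
  have tc: "Tchain mul e (b # bs) = dinv mul e (t + b)"
    unfolding Tchain_def t_def Tinv_def by simp
  show ?case unfolding tc qeq nda_dinv_left[OF assms \<open>t + b \<noteq> 0\<close>]
    by (simp add: Qc_def Pc_def)
qed

lemma key_norm:
  assumes "normed_div_alg mul e" "\<forall>k<length (b # bs). Qc mul e (drop k (b # bs)) \<noteq> 0"
  shows "norm (Tchain mul e (b # bs)) = norm (Qc mul e bs) / norm (Qc mul e (b # bs))"
proof -
  have "norm (Tchain mul e (b # bs)) * norm (Qc mul e (b # bs)) = norm (Qc mul e bs)"
    using arg_cong[OF key[OF assms], of norm] nda_parts(4)[OF assms(1)]
    by (simp add: Pc_def Qc_def)
  moreover have "Qc mul e (b # bs) \<noteq> 0" using assms(2)[rule_format, of 0] by simp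
  ultimately show ?thesis by (simp add: field_simps)
qed

lemma telescope:
  fixes g :: "nat \<Rightarrow> real"
  shows "(\<forall>i\<le>m. g i \<noteq> 0) \<Longrightarrow> (\<Prod>i<m. g (Suc i) / g i) = g m / g 0"
  by (induction m) auto

theorem lemma2p3:
  fixes mul :: "'a::euclidean_space \<Rightarrow> 'a \<Rightarrow> 'a" and e :: 'a
    and a :: "nat \<Rightarrow> 'a" and n :: nat
  assumes "normed_div_alg mul e"
    and "\<forall>i\<in>{1..n}. Qc mul e (map a [i..<Suc n]) \<noteq> 0"
  shows "(\<Prod>i<n. norm (Tchain mul e (map a [Suc i..<Suc n])))
           = 1 / norm (Qc mul e (map a [1..<Suc n]))"
proof -
  define g where "g i = norm (Qc mul e (map a [Suc i..<Suc n]))" for i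
  have ne: "Qc mul e (map a [j..<Suc n]) \<noteq> 0" if "1 \<le> j" "j \<le> n" for j
    using assms(2) that by auto
  have tm: "norm (Tchain mul e (map a [Suc i..<Suc n])) = g (Suc i) / g i" if "i < n" for i
  proof -
    have l: "map a [Suc i..<Suc n] = a (Suc i) # map a [Suc (Suc i)..<Suc n]"
      using that by (simp add: upt_conv_Cons del: upt_Suc)
    have "\<forall>k<length (map a [Suc i..<Suc n]). Qc mul e (drop k (map a [Suc i..<Suc n])) \<noteq> 0"
    proof (intro allI impI)
      fix k assume "k < length (map a [Suc i..<Suc n])"
      hence "Suc i + k \<le> n" by (simp del: upt_Suc)
      thus "Qc mul e (drop k (map a [Suc i..<Suc n])) \<noteq> 0"
        using ne[of "Suc i + k"] by (simp add: drop_map del: upt_Suc)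
    qed
    thus ?thesis using key_norm[OF assms(1), of "a (Suc i)" "map a [Suc (Suc i)..<Suc n]"]
      unfolding l g_def by simp
  qed
  have "(\<Prod>i<n. norm (Tchain mul e (map a [Suc i..<Suc n]))) = (\<Prod>i<n. g (Suc i) / g i)"
    using tm by simp
  also have "\<dots> = g n / g 0"
  proof (rule telescope, intro allI impI)
    fix i assume "i \<le> n"
    show "g i \<noteq> 0"
    proof (cases "i = n")
      case True thus ?thesis using nda_e[OF assms(1)] by (simp add: g_def Qc_def)
    next
      case False thus ?thesis using ne[of "Suc i"] \<open>i \<le> n\<close> by (simp add: g_def)
    qed
  qed
  also have "\<dots> = 1 / norm (Qc mul e (map a [1..<Suc n]))"
    using nda_e[OF assms(1)] by (simp add: g_def Qc_def)
  finally show ?thesis .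
qed

end
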